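(* For any linguistically well-formed {\bf MLL1} sequent $\vdash\Gamma$, its $\eta$-reduced and $\eta$-long translations are $\alpha\eta$-equivalent: $||\vdash\Gamma||_{\eta\to}\equiv_{\alpha\eta}||\vdash\Gamma||$.
   Context: {\bf MLL1} formulas are built from atoms $p(x_1,\ldots,x_n)$ by $\otimes$, par $\wp$, $\forall$, $\exists$. Each predicate symbol has a valency $(k,n-k)$ marking the first $k$ argument occurrences as left and the rest as right (polarity inherited in compound formulas); a sequent is linguistically well-formed if every quantifier binds exactly one left and one right occurrence and each free variable has exactly one left and one right free occurrence. Predicate symbols are identified with {\bf ETTC} literals of the same valencies. $\eta$-long translation: each variable $x$ gives two indices $x^l,x^r$; $||p(x_1,\ldots,x_n)||_{\eta\to}=p^{x^l_1\ldots x^l_k}_{x^r_{k+1}\ldots x^r_n}$, $\otimes,\wp$ and contexts translated homomorphically, $||\forall xA||_{\eta\to}=\nabla^{x^r}_{x^l}||A||_{\eta\to}$, $||\exists xA||_{\eta\to}=\triangle^{x^r}_{x^l}||A||_{\eta\to}$, $||\vdash\Gamma||_{\eta\to}=(\vdash\pi(\Gamma)::||\Gamma||_{\eta\to})$ with $\pi(\Gamma)=\prod_{x\in FV(\Gamma)}\delta^{x^r}_{x^l}$, $\delta^j_i=[\epsilon]^j_i$. $\eta$-reduced translation (defined up to $\alpha$-equivalence): variables are indices, left occurrences upper and right lower, $||p(x_1,\ldots,x_n)||=p^{x_1\ldots x_k}_{x_{k+1}\ldots x_n}$, $\otimes,\wp$ homomorphic, $||\forall xA||=\nabla^u_v||A||^{[v/x]}_{[u/x]}$,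 $||\exists xA||=\triangle^u_v||A||^{[v/x]}_{[u/x]}$ for suitable indices $u,v$, $||\vdash\Gamma||=(\vdash||\Gamma||)$ (term $1$). $\alpha$-equivalence of tensor sequents: renaming bound indices and consistently renaming free indices; $\eta$-equivalence: generated by $t::\Gamma\to_\eta\delta^i_jt::\Gamma^{[j/i]}$ and $t::\Gamma\to_\eta\delta^j_it::\Gamma_{[j/i]}$ ($j$ fresh) when $i$ has both a free upper and a free lower occurrence in $\Gamma$. *)

theory Defs
  imports Main "HOL-Library.Multiset"
begin

section \<open>MLL1 formulas\<close>

type_synonym var = nat
type_synonym idx = nat

text \<open>Predicate symbols of type 'p; a valency function val p = (k, n-k):
 the first k argument occurrences are left, the remaining ones right.\<close>

datatype 'p fm =
    Atom 'p "var list"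
  | Tensor "'p fm" "'p fm"
  | Par "'p fm" "'p fm"
  | All var "'p fm"
  | Ex var "'p fm"

fun arity_ok :: "('p \<Rightarrow> nat \<times> nat) \<Rightarrow> 'p fm \<Rightarrow> bool" where
  "arity_ok val (Atom p xs) = (length xs = fst (val p) + snd (val p))"
| "arity_ok val (Tensor A B) = (arity_ok val A \<and> arity_ok val B)"
| "arity_ok val (Par A B) = (arity_ok val A \<and> arity_ok val B)"
| "arity_ok val (All x A) = arity_ok val A"
| "arity_ok val (Ex x A) = arity_ok val A"

fun lfree :: "('p \<Rightarrow> nat \<times> nat) \<Rightarrow> var \<Rightarrow> 'p fm \<Rightarrow> nat" where
  "lfree val x (Atom p xs) = count (mset (take (fst (val p)) xs)) x"
| "lfree val x (Tensor A B) = lfree val x A + lfree val x B"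
| "lfree val x (Par A B) = lfree val x A + lfree val x B"
| "lfree val x (All y A) = (if y = x then 0 else lfree val x A)"
| "lfree val x (Ex y A) = (if y = x then 0 else lfree val x A)"

fun rfree :: "('p \<Rightarrow> nat \<times> nat) \<Rightarrow> var \<Rightarrow> 'p fm \<Rightarrow> nat" where
  "rfree val x (Atom p xs) = count (mset (drop (fst (val p)) xs)) x"
| "rfree val x (Tensor A B) = rfree val x A + rfree val x B"
| "rfree val x (Par A B) = rfree val x A + rfree val x B"
| "rfree val x (All y A) = (if y = x then 0 else rfree val x A)"
| "rfree val x (Ex y A) = (if y = x then 0 else rfree val x A)"

fun quant_ok :: "('p \<Rightarrow> nat \<times> nat) \<Rightarrow> 'p fm \<Rightarrow> bool" where
  "quant_ok val (Atom p xs) = True"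
| "quant_ok val (Tensor A B) = (quant_ok val A \<and> quant_ok val B)"
| "quant_ok val (Par A B) = (quant_ok val A \<and> quant_ok val B)"
| "quant_ok val (All x A) = (lfree val x A = 1 \<and> rfree val x A = 1 \<and> quant_ok val A)"
| "quant_ok val (Ex x A) = (lfree val x A = 1 \<and> rfree val x A = 1 \<and> quant_ok val A)"

definition lfree_seq :: "('p \<Rightarrow> nat \<times> nat) \<Rightarrow> var \<Rightarrow> 'p fm list \<Rightarrow> nat" where
  "lfree_seq val x \<Gamma> = sum_list (map (lfree val x) \<Gamma>)"

definition rfree_seq :: "('p \<Rightarrow> nat \<times> nat) \<Rightarrow> var \<Rightarrow> 'p fm list \<Rightarrow> nat" where
  "rfree_seq val x \<Gamma> = sum_list (map (rfree val x) \<Gamma>)"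

definition FV_seq :: "('p \<Rightarrow> nat \<times> nat) \<Rightarrow> 'p fm list \<Rightarrow> var set" where
  "FV_seq val \<Gamma> = {x. lfree_seq val x \<Gamma> + rfree_seq val x \<Gamma> > 0}"

definition ling_wf :: "('p \<Rightarrow> nat \<times> nat) \<Rightarrow> 'p fm list \<Rightarrow> bool" where
  "ling_wf val \<Gamma> \<longleftrightarrow>
     (\<forall>A\<in>set \<Gamma>. arity_ok val A \<and> quant_ok val A) \<and>
     (\<forall>x\<in>FV_seq val \<Gamma>. lfree_seq val x \<Gamma> = 1 \<and> rfree_seq val x \<Gamma> = 1)"

section \<open>ETTC tensor formulas and sequents\<close>

text \<open>TLit p us ls is the literal p with upper indices us and lower indices ls.
  Nabla u v A is nabla with upper index u and lower index v (binding the lower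
  occurrence of u and the upper occurrence of v in A); Tri likewise for triangle.\<close>

datatype 'p tf =
    TLit 'p "idx list" "idx list"
  | TTensor "'p tf" "'p tf"
  | TPar "'p tf" "'p tf"
  | Nabla idx idx "'p tf"
  | Tri idx idx "'p tf"

text \<open>Tensor terms (products of Kronecker deltas): a multiset of pairs (j, i)
  standing for delta^j_i (upper j, lower i); the empty multiset is the term 1.\<close>
type_synonym tm = "(idx \<times> idx) multiset"

definition delta :: "idx \<Rightarrow> idx \<Rightarrow> tm" where
  "delta j i = {#(j, i)#}"

type_synonym 'p tseq = "tm \<times> 'p tf list"

fun idxs :: "'p tf \<Rightarrow> idx set" where
  "idxs (TLit p us ls) = set us \<union> set ls"
| "idxs (TTensor A B) = idxs A \<union> idxs B"
| "idxs (TPar A B) = idxs A \<union> idxs B"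
| "idxs (Nabla u v A) = {u, v} \<union> idxs A"
| "idxs (Tri u v A) = {u, v} \<union> idxs A"

definition seq_idxs :: "'p tseq \<Rightarrow> idx set" where
  "seq_idxs S = (\<Union>(j, i)\<in>set_mset (fst S). {j, i}) \<union> (\<Union>A\<in>set (snd S). idxs A)"

fun subst_up :: "idx \<Rightarrow> idx \<Rightarrow> 'p tf \<Rightarrow> 'p tf" where
  "subst_up j i (TLit p us ls) = TLit p (map (\<lambda>a. if a = i then j else a) us) ls"
| "subst_up j i (TTensor A B) = TTensor (subst_up j i A) (subst_up j i B)"
| "subst_up j i (TPar A B) = TPar (subst_up j i A) (subst_up j i B)"
| "subst_up j i (Nabla u v A) = (if i = v then Nabla u v A else Nabla u v (subst_up j i A))"
| "subst_up j i (Tri u v A) = (if i = v then Tri u v A else Tri u v (subst_up j i A))"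

fun subst_lo :: "idx \<Rightarrow> idx \<Rightarrow> 'p tf \<Rightarrow> 'p tf" where
  "subst_lo j i (TLit p us ls) = TLit p us (map (\<lambda>a. if a = i then j else a) ls)"
| "subst_lo j i (TTensor A B) = TTensor (subst_lo j i A) (subst_lo j i B)"
| "subst_lo j i (TPar A B) = TPar (subst_lo j i A) (subst_lo j i B)"
| "subst_lo j i (Nabla u v A) = (if i = u then Nabla u v A else Nabla u v (subst_lo j i A))"
| "subst_lo j i (Tri u v A) = (if i = u then Tri u v A else Tri u v (subst_lo j i A))"

fun free_up :: "idx \<Rightarrow> 'p tf \<Rightarrow> bool" where
  "free_up i (TLit p us ls) = (i \<in> set us)"
| "free_up i (TTensor A B) = (free_up i A \<or> free_up i B)"
| "free_up i (TPar A B) = (free_up i A \<or> free_up i B)"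
| "free_up i (Nabla u v A) = (i \<noteq> v \<and> free_up i A)"
| "free_up i (Tri u v A) = (i \<noteq> v \<and> free_up i A)"

fun free_lo :: "idx \<Rightarrow> 'p tf \<Rightarrow> bool" where
  "free_lo i (TLit p us ls) = (i \<in> set ls)"
| "free_lo i (TTensor A B) = (free_lo i A \<or> free_lo i B)"
| "free_lo i (TPar A B) = (free_lo i A \<or> free_lo i B)"
| "free_lo i (Nabla u v A) = (i \<noteq> u \<and> free_lo i A)"
| "free_lo i (Tri u v A) = (i \<noteq> u \<and> free_lo i A)"

fun ren :: "(idx \<Rightarrow> idx) \<Rightarrow> 'p tf \<Rightarrow> 'p tf" where
  "ren f (TLit p us ls) = TLit p (map f us) (map f ls)"
| "ren f (TTensor A B) = TTensor (ren f A) (ren f B)"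
| "ren f (TPar A B) = TPar (ren f A) (ren f B)"
| "ren f (Nabla u v A) = Nabla (f u) (f v) (ren f A)"
| "ren f (Tri u v A) = Tri (f u) (f v) (ren f A)"

inductive alpha1 :: "'p tf \<Rightarrow> 'p tf \<Rightarrow> bool" where
  nabla: "u' \<notin> idxs A \<Longrightarrow> v' \<notin> idxs A \<Longrightarrow> u' \<noteq> v' \<Longrightarrow>
     alpha1 (Nabla u v A) (Nabla u' v' (subst_lo u' u (subst_up v' v A)))"
| tri: "u' \<notin> idxs A \<Longrightarrow> v' \<notin> idxs A \<Longrightarrow> u' \<noteq> v' \<Longrightarrow>
     alpha1 (Tri u v A) (Tri u' v' (subst_lo u' u (subst_up v' v A)))"
| tensorL: "alpha1 A A' \<Longrightarrow> alpha1 (TTensor A B) (TTensor A' B)"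
| tensorR: "alpha1 B B' \<Longrightarrow> alpha1 (TTensor A B) (TTensor A B')"
| parL: "alpha1 A A' \<Longrightarrow> alpha1 (TPar A B) (TPar A' B)"
| parR: "alpha1 B B' \<Longrightarrow> alpha1 (TPar A B) (TPar A B')"
| nablaC: "alpha1 A A' \<Longrightarrow> alpha1 (Nabla u v A) (Nabla u v A')"
| triC: "alpha1 A A' \<Longrightarrow> alpha1 (Tri u v A) (Tri u v A')"

inductive alpha_step :: "'p tseq \<Rightarrow> 'p tseq \<Rightarrow> bool" where
  bound: "k < length \<Gamma> \<Longrightarrow> alpha1 (\<Gamma> ! k) A' \<Longrightarrow> alpha_step (t, \<Gamma>) (t, \<Gamma>[k := A'])"
| rename: "inj f \<Longrightarrow> alpha_step (t, \<Gamma>) (image_mset (map_prod f f) t, map (ren f) \<Gamma>)"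

inductive eta_step :: "'p tseq \<Rightarrow> 'p tseq \<Rightarrow> bool" where
  up: "(\<exists>A\<in>set \<Gamma>. free_up i A) \<Longrightarrow> (\<exists>A\<in>set \<Gamma>. free_lo i A) \<Longrightarrow> j \<notin> seq_idxs (t, \<Gamma>) \<Longrightarrow>
     eta_step (t, \<Gamma>) (delta i j + t, map (subst_up j i) \<Gamma>)"
| lo: "(\<exists>A\<in>set \<Gamma>. free_up i A) \<Longrightarrow> (\<exists>A\<in>set \<Gamma>. free_lo i A) \<Longrightarrow> j \<notin> seq_idxs (t, \<Gamma>) \<Longrightarrow>
     eta_step (t, \<Gamma>) (delta j i + t, map (subst_lo j i) \<Gamma>)"

definition alpha_eta_equiv :: "'p tseq \<Rightarrow> 'p tseq \<Rightarrow> bool" (infix "\<equiv>\<^sub>\<alpha>\<^sub>\<eta>" 50) where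
  "S \<equiv>\<^sub>\<alpha>\<^sub>\<eta> S' \<longleftrightarrow> equivclp (\<lambda>X Y. alpha_step X Y \<or> eta_step X Y) S S'"

section \<open>Translations\<close>

definition xl :: "var \<Rightarrow> idx" where "xl x = 2 * x"
definition xr :: "var \<Rightarrow> idx" where "xr x = 2 * x + 1"

fun eta_long :: "('p \<Rightarrow> nat \<times> nat) \<Rightarrow> 'p fm \<Rightarrow> 'p tf" where
  "eta_long val (Atom p xs) =
     TLit p (map xl (take (fst (val p)) xs)) (map xr (drop (fst (val p)) xs))"
| "eta_long val (Tensor A B) = TTensor (eta_long val A) (eta_long val B)"
| "eta_long val (Par A B) = TPar (eta_long val A) (eta_long val B)"
| "eta_long val (All x A) = Nabla (xr x) (xl x) (eta_long val A)"
| "eta_long val (Ex x A) = Tri (xr x) (xl x) (eta_long val A)"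

definition eta_long_seq :: "('p \<Rightarrow> nat \<times> nat) \<Rightarrow> 'p fm list \<Rightarrow> 'p tseq" where
  "eta_long_seq val \<Gamma> =
     (\<Sum>x\<in>FV_seq val \<Gamma>. delta (xr x) (xl x), map (eta_long val) \<Gamma>)"

text \<open>The eta-reduced translation, defined up to alpha-equivalence: a relation
  between a formula and each of its admissible translations (any suitable, i.e.
  fresh and distinct, choice of the binder indices u, v).\<close>
inductive eta_red :: "('p \<Rightarrow> nat \<times> nat) \<Rightarrow> 'p fm \<Rightarrow> 'p tf \<Rightarrow> bool" for val where
  atom: "eta_red val (Atom p xs) (TLit p (take (fst (val p)) xs) (drop (fst (val p)) xs))"
| tensor: "eta_red val A A' \<Longrightarrow> eta_red val B B' \<Longrightarrow> eta_red val (Tensor A B) (TTensor A' B')"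
| par: "eta_red val A A' \<Longrightarrow> eta_red val B B' \<Longrightarrow> eta_red val (Par A B) (TPar A' B')"
| all: "eta_red val A A' \<Longrightarrow> u \<notin> idxs A' \<Longrightarrow> v \<notin> idxs A' \<Longrightarrow> u \<noteq> v \<Longrightarrow>
     eta_red val (All x A) (Nabla u v (subst_lo u x (subst_up v x A')))"
| ex: "eta_red val A A' \<Longrightarrow> u \<notin> idxs A' \<Longrightarrow> v \<notin> idxs A' \<Longrightarrow> u \<noteq> v \<Longrightarrow>
     eta_red val (Ex x A) (Tri u v (subst_lo u x (subst_up v x A')))"

definition eta_red_seq :: "('p \<Rightarrow> nat \<times> nat) \<Rightarrow> 'p fm list \<Rightarrow> 'p tseq \<Rightarrow> bool" where
  "eta_red_seq val \<Gamma> S \<longleftrightarrow> (\<exists>\<Gamma>'. list_all2 (eta_red val) \<Gamma> \<Gamma>' \<and> S = ({#}, \<Gamma>'))"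

end

theory Submission
  imports Defs
begin

lemma equivclp_map:
  assumes "\<And>x y. r x y \<Longrightarrow> s (f x) (f y)"
    and "equivclp r a b"
  shows "equivclp s (f a) (f b)"
  using assms(2)
proof (induction rule: equivclp_induct)
  case base
  then show ?case by (simp add: comp_def)
next
  case (step y z)
  then show ?case using assms(1) by (meson equivclp_into_equivclp)
qed

inductive tr :: "('p \<Rightarrow> nat \<times> nat) \<Rightarrow> (var \<Rightarrow> idx \<times> idx) \<Rightarrow> 'p fm \<Rightarrow> 'p tf \<Rightarrow> bool"
  for val where
  atom: "tr val \<sigma> (Atom p xs) (TLit p (map (fst \<circ> \<sigma>) (take (fst (val p)) xs)) (map (snd \<circ> \<sigma>) (drop (fst (val p)) xs)))"
| tensor: "tr val \<sigma> A A' \<Longrightarrow> tr val \<sigma> B B' \<Longrightarrow> tr val \<sigma> (Tensor A B) (TTensor A' B')"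
| par: "tr val \<sigma> A A' \<Longrightarrow> tr val \<sigma> B B' \<Longrightarrow> tr val \<sigma> (Par A B) (TPar A' B')"
| all: "tr val (\<sigma>(x := (v, u))) A B \<Longrightarrow>
     (\<forall>y. y \<noteq> x \<longrightarrow> lfree val y A > 0 \<longrightarrow> fst (\<sigma> y) \<noteq> v) \<Longrightarrow>
     (\<forall>y. y \<noteq> x \<longrightarrow> rfree val y A > 0 \<longrightarrow> snd (\<sigma> y) \<noteq> u) \<Longrightarrow>
     tr val \<sigma> (All x A) (Nabla u v B)"
| ex: "tr val (\<sigma>(x := (v, u))) A B \<Longrightarrow>
     (\<forall>y. y \<noteq> x \<longrightarrow> lfree val y A > 0 \<longrightarrow> fst (\<sigma> y) \<noteq> v) \<Longrightarrow>
     (\<forall>y. y \<noteq> x \<longrightarrow> rfree val y A > 0 \<longrightarrow> snd (\<sigma> y) \<noteq> u) \<Longrightarrow>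
     tr val \<sigma> (Ex x A) (Tri u v B)"

inductive_cases trE_atom: "tr val \<sigma> (Atom p xs) T"
inductive_cases trE_tensor: "tr val \<sigma> (Tensor A B) T"
inductive_cases trE_par: "tr val \<sigma> (Par A B) T"
inductive_cases trE_all: "tr val \<sigma> (All x A) T"
inductive_cases trE_ex: "tr val \<sigma> (Ex x A) T"

definition agree :: "('p \<Rightarrow> nat \<times> nat) \<Rightarrow> (var \<Rightarrow> idx \<times> idx) \<Rightarrow> (var \<Rightarrow> idx \<times> idx) \<Rightarrow> 'p fm \<Rightarrow> bool" where
  "agree val \<sigma>1 \<sigma>2 A \<longleftrightarrow> (\<forall>y. lfree val y A > 0 \<longrightarrow> fst (\<sigma>1 y) = fst (\<sigma>2 y)) \<and>
      (\<forall>y. rfree val y A > 0 \<longrightarrow> snd (\<sigma>1 y) = snd (\<sigma>2 y))"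

lemma atom_eq:
  assumes "agree val \<sigma> \<sigma>' (Atom p xs)"
  shows "map (fst \<circ> \<sigma>) (take (fst (val p)) xs) = map (fst \<circ> \<sigma>') (take (fst (val p)) xs)"
    and "map (snd \<circ> \<sigma>) (drop (fst (val p)) xs) = map (snd \<circ> \<sigma>') (drop (fst (val p)) xs)"
  using assms by (auto simp: agree_def intro!: map_cong)

lemma tr_cong:
  assumes "tr val \<sigma> A T" "agree val \<sigma> \<sigma>' A"
  shows "tr val \<sigma>' A T"
  using assms
proof (induction arbitrary: \<sigma>' rule: tr.induct)
  case (atom \<sigma> p xs)
  then show ?case by (simp only: atom_eq[OF atom(1)] tr.atom)
next
  case (tensor \<sigma> A A' B B')
  then show ?case by (auto simp: agree_def intro!: tr.tensor)
next
  case (par \<sigma> A A' B B')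
  then show ?case by (auto simp: agree_def intro!: tr.par)
next
  case (all \<sigma> x v u A B)
  have "tr val (\<sigma>'(x := (v, u))) A B"
    using all by (intro all.IH) (auto simp: agree_def split: if_splits)
  moreover have "\<forall>y. y \<noteq> x \<longrightarrow> lfree val y A > 0 \<longrightarrow> fst (\<sigma>' y) \<noteq> v"
    using all by (auto simp: agree_def)
  moreover have "\<forall>y. y \<noteq> x \<longrightarrow> rfree val y A > 0 \<longrightarrow> snd (\<sigma>' y) \<noteq> u"
    using all by (auto simp: agree_def)
  ultimately show ?case by (rule tr.all)
next
  case (ex \<sigma> x v u A B)
  have "tr val (\<sigma>'(x := (v, u))) A B"
    using ex by (intro ex.IH) (auto simp: agree_def split: if_splits)
  moreover have "\<forall>y. y \<noteq> x \<longrightarrow> lfree val y A > 0 \<longrightarrow> fst (\<sigma>' y) \<noteq> v"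
    using ex by (auto simp: agree_def)
  moreover have "\<forall>y. y \<noteq> x \<longrightarrow> rfree val y A > 0 \<longrightarrow> snd (\<sigma>' y) \<noteq> u"
    using ex by (auto simp: agree_def)
  ultimately show ?case by (rule tr.ex)
qed

definition upd_up :: "idx \<Rightarrow> idx \<Rightarrow> (var \<Rightarrow> idx \<times> idx) \<Rightarrow> var \<Rightarrow> idx \<times> idx" where
  "upd_up j i \<sigma> = (\<lambda>y. (if fst (\<sigma> y) = i then j else fst (\<sigma> y), snd (\<sigma> y)))"

definition upd_lo :: "idx \<Rightarrow> idx \<Rightarrow> (var \<Rightarrow> idx \<times> idx) \<Rightarrow> var \<Rightarrow> idx \<times> idx" where
  "upd_lo j i \<sigma> = (\<lambda>y. (fst (\<sigma> y), if snd (\<sigma> y) = i then j else snd (\<sigma> y)))"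

lemma upd_up_fun_upd: "v \<noteq> i \<Longrightarrow> upd_up j i (\<sigma>(x := (v, u))) = (upd_up j i \<sigma>)(x := (v, u))"
  by (auto simp: upd_up_def)

lemma upd_lo_fun_upd: "u \<noteq> i \<Longrightarrow> upd_lo j i (\<sigma>(x := (v, u))) = (upd_lo j i \<sigma>)(x := (v, u))"
  by (auto simp: upd_lo_def)

lemma tr_subst_up:
  assumes "tr val \<sigma> A T" "j \<notin> idxs T"
  shows "tr val (upd_up j i \<sigma>) A (subst_up j i T)"
  using assms
proof (induction rule: tr.induct)
  case (atom \<sigma> p xs)
  have "subst_up j i (TLit p (map (fst \<circ> \<sigma>) (take (fst (val p)) xs)) (map (snd \<circ> \<sigma>) (drop (fst (val p)) xs)))
    = TLit p (map (fst \<circ> upd_up j i \<sigma>) (take (fst (val p)) xs)) (map (snd \<circ> upd_up j i \<sigma>) (drop (fst (val p)) xs))"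
    by (simp add: upd_up_def)
  then show ?case by (simp only: tr.atom)
next
  case (tensor \<sigma> A A' B B')
  then show ?case by (auto intro!: tr.tensor)
next
  case (par \<sigma> A A' B B')
  then show ?case by (auto intro!: tr.par)
next
  case (all \<sigma> x v u A B)
  show ?case
  proof (cases "i = v")
    case True
    have "tr val ((upd_up j i \<sigma>)(x := (v, u))) A B"
      using all by (intro tr_cong[OF all(1)]) (auto simp: agree_def upd_up_def True)
    moreover have "\<forall>y. y \<noteq> x \<longrightarrow> lfree val y A > 0 \<longrightarrow> fst (upd_up j i \<sigma> y) \<noteq> v"
      using all by (auto simp: upd_up_def True)
    moreover have "\<forall>y. y \<noteq> x \<longrightarrow> rfree val y A > 0 \<longrightarrow> snd (upd_up j i \<sigma> y) \<noteq> u"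
      using all by (auto simp: upd_up_def)
    ultimately show ?thesis using True by (auto intro: tr.all)
  next
    case False
    have "tr val (upd_up j i (\<sigma>(x := (v, u)))) A (subst_up j i B)"
      by (rule all.IH) (use all.prems in simp)
    then have "tr val ((upd_up j i \<sigma>)(x := (v, u))) A (subst_up j i B)"
      by (simp only: upd_up_fun_upd[OF not_sym[OF False]])
    moreover have "\<forall>y. y \<noteq> x \<longrightarrow> lfree val y A > 0 \<longrightarrow> fst (upd_up j i \<sigma> y) \<noteq> v"
      using all by (auto simp: upd_up_def)
    moreover have "\<forall>y. y \<noteq> x \<longrightarrow> rfree val y A > 0 \<longrightarrow> snd (upd_up j i \<sigma> y) \<noteq> u"
      using all by (auto simp: upd_up_def)
    ultimately show ?thesis using False by (auto intro: tr.all)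
  qed
next
  case (ex \<sigma> x v u A B)
  show ?case
  proof (cases "i = v")
    case True
    have "tr val ((upd_up j i \<sigma>)(x := (v, u))) A B"
      using ex by (intro tr_cong[OF ex(1)]) (auto simp: agree_def upd_up_def True)
    moreover have "\<forall>y. y \<noteq> x \<longrightarrow> lfree val y A > 0 \<longrightarrow> fst (upd_up j i \<sigma> y) \<noteq> v"
      using ex by (auto simp: upd_up_def True)
    moreover have "\<forall>y. y \<noteq> x \<longrightarrow> rfree val y A > 0 \<longrightarrow> snd (upd_up j i \<sigma> y) \<noteq> u"
      using ex by (auto simp: upd_up_def)
    ultimately show ?thesis using True by (auto intro: tr.ex)
  next
    case False
    have "tr val (upd_up j i (\<sigma>(x := (v, u)))) A (subst_up j i B)"
      by (rule ex.IH) (use ex.prems in simp)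
    then have "tr val ((upd_up j i \<sigma>)(x := (v, u))) A (subst_up j i B)"
      by (simp only: upd_up_fun_upd[OF not_sym[OF False]])
    moreover have "\<forall>y. y \<noteq> x \<longrightarrow> lfree val y A > 0 \<longrightarrow> fst (upd_up j i \<sigma> y) \<noteq> v"
      using ex by (auto simp: upd_up_def)
    moreover have "\<forall>y. y \<noteq> x \<longrightarrow> rfree val y A > 0 \<longrightarrow> snd (upd_up j i \<sigma> y) \<noteq> u"
      using ex by (auto simp: upd_up_def)
    ultimately show ?thesis using False by (auto intro: tr.ex)
  qed
qed

lemma tr_subst_lo:
  assumes "tr val \<sigma> A T" "j \<notin> idxs T"
  shows "tr val (upd_lo j i \<sigma>) A (subst_lo j i T)"
  using assms
proof (induction rule: tr.induct)
  case (atom \<sigma> p xs)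
  have "subst_lo j i (TLit p (map (fst \<circ> \<sigma>) (take (fst (val p)) xs)) (map (snd \<circ> \<sigma>) (drop (fst (val p)) xs)))
    = TLit p (map (fst \<circ> upd_lo j i \<sigma>) (take (fst (val p)) xs)) (map (snd \<circ> upd_lo j i \<sigma>) (drop (fst (val p)) xs))"
    by (simp add: upd_lo_def)
  then show ?case by (simp only: tr.atom)
next
  case (tensor \<sigma> A A' B B')
  then show ?case by (auto intro!: tr.tensor)
next
  case (par \<sigma> A A' B B')
  then show ?case by (auto intro!: tr.par)
next
  case (all \<sigma> x v u A B)
  show ?case
  proof (cases "i = u")
    case True
    have "tr val ((upd_lo j i \<sigma>)(x := (v, u))) A B"
      using all by (intro tr_cong[OF all(1)]) (auto simp: agree_def upd_lo_def True)
    moreover have "\<forall>y. y \<noteq> x \<longrightarrow> lfree val y A > 0 \<longrightarrow> fst (upd_lo j i \<sigma> y) \<noteq> v"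
      using all by (auto simp: upd_lo_def)
    moreover have "\<forall>y. y \<noteq> x \<longrightarrow> rfree val y A > 0 \<longrightarrow> snd (upd_lo j i \<sigma> y) \<noteq> u"
      using all by (auto simp: upd_lo_def True)
    ultimately show ?thesis using True by (auto intro: tr.all)
  next
    case False
    have "tr val (upd_lo j i (\<sigma>(x := (v, u)))) A (subst_lo j i B)"
      by (rule all.IH) (use all.prems in simp)
    then have "tr val ((upd_lo j i \<sigma>)(x := (v, u))) A (subst_lo j i B)"
      by (simp only: upd_lo_fun_upd[OF not_sym[OF False]])
    moreover have "\<forall>y. y \<noteq> x \<longrightarrow> lfree val y A > 0 \<longrightarrow> fst (upd_lo j i \<sigma> y) \<noteq> v"
      using all by (auto simp: upd_lo_def)
    moreover have "\<forall>y. y \<noteq> x \<longrightarrow> rfree val y A > 0 \<longrightarrow> snd (upd_lo j i \<sigma> y) \<noteq> u"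
      using all by (auto simp: upd_lo_def)
    ultimately show ?thesis using False by (auto intro: tr.all)
  qed
next
  case (ex \<sigma> x v u A B)
  show ?case
  proof (cases "i = u")
    case True
    have "tr val ((upd_lo j i \<sigma>)(x := (v, u))) A B"
      using ex by (intro tr_cong[OF ex(1)]) (auto simp: agree_def upd_lo_def True)
    moreover have "\<forall>y. y \<noteq> x \<longrightarrow> lfree val y A > 0 \<longrightarrow> fst (upd_lo j i \<sigma> y) \<noteq> v"
      using ex by (auto simp: upd_lo_def)
    moreover have "\<forall>y. y \<noteq> x \<longrightarrow> rfree val y A > 0 \<longrightarrow> snd (upd_lo j i \<sigma> y) \<noteq> u"
      using ex by (auto simp: upd_lo_def True)
    ultimately show ?thesis using True by (auto intro: tr.ex)
  next
    case False
    have "tr val (upd_lo j i (\<sigma>(x := (v, u)))) A (subst_lo j i B)"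
      by (rule ex.IH) (use ex.prems in simp)
    then have "tr val ((upd_lo j i \<sigma>)(x := (v, u))) A (subst_lo j i B)"
      by (simp only: upd_lo_fun_upd[OF not_sym[OF False]])
    moreover have "\<forall>y. y \<noteq> x \<longrightarrow> lfree val y A > 0 \<longrightarrow> fst (upd_lo j i \<sigma> y) \<noteq> v"
      using ex by (auto simp: upd_lo_def)
    moreover have "\<forall>y. y \<noteq> x \<longrightarrow> rfree val y A > 0 \<longrightarrow> snd (upd_lo j i \<sigma> y) \<noteq> u"
      using ex by (auto simp: upd_lo_def)
    ultimately show ?thesis using False by (auto intro: tr.ex)
  qed
qed

lemma idxs_subst_up: "idxs (subst_up j i T) \<subseteq> idxs T \<union> {j}"
  by (induction T) auto

lemma idxs_subst_lo: "idxs (subst_lo j i T) \<subseteq> idxs T \<union> {j}"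
  by (induction T) auto

lemma finite_idxs: "finite (idxs T)"
  by (induction T) auto

lemma idxs_ren: "idxs (ren f T) = f ` idxs T"
  by (induction T) auto

lemma free_up_idxs: "free_up i T \<Longrightarrow> i \<in> idxs T"
  by (induction T) auto

lemma free_lo_idxs: "free_lo i T \<Longrightarrow> i \<in> idxs T"
  by (induction T) auto

lemma tr_free:
  assumes "tr val \<sigma> A T"
  shows "(lfree val y A > 0 \<longrightarrow> free_up (fst (\<sigma> y)) T) \<and>
         (rfree val y A > 0 \<longrightarrow> free_lo (snd (\<sigma> y)) T)"
  using assms
proof (induction arbitrary: y rule: tr.induct)
  case (all \<sigma> x v u A B)
  show ?case
  proof (cases "y = x")
    case False
    then have "fst ((\<sigma>(x := (v, u))) y) = fst (\<sigma> y)" "snd ((\<sigma>(x := (v, u))) y) = snd (\<sigma> y)" by auto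
    then show ?thesis using all.IH[of y] all.hyps False by auto
  qed simp
next
  case (ex \<sigma> x v u A B)
  show ?case
  proof (cases "y = x")
    case False
    then have "fst ((\<sigma>(x := (v, u))) y) = fst (\<sigma> y)" "snd ((\<sigma>(x := (v, u))) y) = snd (\<sigma> y)" by auto
    then show ?thesis using ex.IH[of y] ex.hyps False by auto
  qed simp
qed auto

lemma tr_ren:
  assumes "tr val \<sigma> A T" "inj f"
  shows "tr val (map_prod f f \<circ> \<sigma>) A (ren f T)"
  using assms
proof (induction rule: tr.induct)
  case (atom \<sigma> p xs)
  then show ?case using tr.atom[of val "map_prod f f \<circ> \<sigma>" p xs] by (simp add: comp_def)
next
  case (tensor \<sigma> A A' B B')
  then show ?case by (auto intro!: tr.tensor)
next
  case (par \<sigma> A A' B B')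
  then show ?case by (auto intro!: tr.par)
next
  case (all \<sigma> x v u A B)
  have e: "(map_prod f f \<circ> \<sigma>)(x := (f v, f u)) = map_prod f f \<circ> \<sigma>(x := (v, u))" by auto
  have "tr val (map_prod f f \<circ> \<sigma>) (All x A) (Nabla (f u) (f v) (ren f B))"
  proof (rule tr.all)
    show "tr val ((map_prod f f \<circ> \<sigma>)(x := (f v, f u))) A (ren f B)"
      unfolding e by (rule all.IH[OF all.prems])
  qed (use all.hyps all.prems in \<open>auto simp: inj_eq\<close>)
  then show ?case by (simp add: comp_def)
next
  case (ex \<sigma> x v u A B)
  have e: "(map_prod f f \<circ> \<sigma>)(x := (f v, f u)) = map_prod f f \<circ> \<sigma>(x := (v, u))" by auto
  have "tr val (map_prod f f \<circ> \<sigma>) (Ex x A) (Tri (f u) (f v) (ren f B))"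
  proof (rule tr.ex)
    show "tr val ((map_prod f f \<circ> \<sigma>)(x := (f v, f u))) A (ren f B)"
      unfolding e by (rule ex.IH[OF ex.prems])
  qed (use ex.hyps ex.prems in \<open>auto simp: inj_eq\<close>)
  then show ?case by (simp add: comp_def)
qed


lemma eta_red_tr:
  assumes "eta_red val A A'"
  shows "tr val (\<lambda>y. (y, y)) A A'"
  using assms
proof (induction rule: eta_red.induct)
  case (atom p xs)
  show ?case using tr.atom[of val "\<lambda>y. (y, y)" p xs] by (simp add: comp_def)
next
  case (tensor A A' B B')
  then show ?case by (blast intro: tr.tensor)
next
  case (par A A' B B')
  then show ?case by (blast intro: tr.par)
next
  case (all A A' u v x)
  have t1: "tr val (upd_up v x (\<lambda>y. (y, y))) A (subst_up v x A')"
    by (rule tr_subst_up[OF all.IH all.hyps(3)])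
  have "u \<notin> idxs (subst_up v x A')"
    using idxs_subst_up[of v x A'] all.hyps by auto
  then have t2: "tr val (upd_lo u x (upd_up v x (\<lambda>y. (y, y)))) A (subst_lo u x (subst_up v x A'))"
    by (rule tr_subst_lo[OF t1])
  have e: "upd_lo u x (upd_up v x (\<lambda>y. (y, y))) = (\<lambda>y. (y, y))(x := (v, u))"
    by (auto simp: upd_lo_def upd_up_def)
  show ?case
  proof (rule tr.all)
    show "tr val ((\<lambda>y. (y, y))(x := (v, u))) A (subst_lo u x (subst_up v x A'))"
      using t2 e by simp
    show "\<forall>y. y \<noteq> x \<longrightarrow> lfree val y A > 0 \<longrightarrow> fst (y, y) \<noteq> v"
      using tr_free[OF all.IH] free_up_idxs all.hyps(3) by (metis fst_conv)
    show "\<forall>y. y \<noteq> x \<longrightarrow> rfree val y A > 0 \<longrightarrow> snd (y, y) \<noteq> u"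
      using tr_free[OF all.IH] free_lo_idxs all.hyps(2) by (metis snd_conv)
  qed
next
  case (ex A A' u v x)
  have t1: "tr val (upd_up v x (\<lambda>y. (y, y))) A (subst_up v x A')"
    by (rule tr_subst_up[OF ex.IH ex.hyps(3)])
  have "u \<notin> idxs (subst_up v x A')"
    using idxs_subst_up[of v x A'] ex.hyps by auto
  then have t2: "tr val (upd_lo u x (upd_up v x (\<lambda>y. (y, y)))) A (subst_lo u x (subst_up v x A'))"
    by (rule tr_subst_lo[OF t1])
  have e: "upd_lo u x (upd_up v x (\<lambda>y. (y, y))) = (\<lambda>y. (y, y))(x := (v, u))"
    by (auto simp: upd_lo_def upd_up_def)
  show ?case
  proof (rule tr.ex)
    show "tr val ((\<lambda>y. (y, y))(x := (v, u))) A (subst_lo u x (subst_up v x A'))"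
      using t2 e by simp
    show "\<forall>y. y \<noteq> x \<longrightarrow> lfree val y A > 0 \<longrightarrow> fst (y, y) \<noteq> v"
      using tr_free[OF ex.IH] free_up_idxs ex.hyps(3) by (metis fst_conv)
    show "\<forall>y. y \<noteq> x \<longrightarrow> rfree val y A > 0 \<longrightarrow> snd (y, y) \<noteq> u"
      using tr_free[OF ex.IH] free_lo_idxs ex.hyps(2) by (metis snd_conv)
  qed
qed

lemma eta_long_tr: "tr val (\<lambda>y. (xl y, xr y)) A (eta_long val A)"
proof (induction A)
  case (Atom p xs)
  show ?case using tr.atom[of val "\<lambda>y. (xl y, xr y)" p xs] by (simp add: comp_def)
next
  case (Tensor A B)
  then show ?case by (auto intro: tr.tensor)
next
  case (Par A B)
  then show ?case by (auto intro: tr.par)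
next
  case (All x A)
  have e: "(\<lambda>y. (xl y, xr y))(x := (xl x, xr x)) = (\<lambda>y. (xl y, xr y))" by auto
  show ?case
    by (simp, rule tr.all) (use All e in \<open>auto simp: xl_def xr_def\<close>)
next
  case (Ex x A)
  have e: "(\<lambda>y. (xl y, xr y))(x := (xl x, xr x)) = (\<lambda>y. (xl y, xr y))" by auto
  show ?case
    by (simp, rule tr.ex) (use Ex e in \<open>auto simp: xl_def xr_def\<close>)
qed

lemma agree_tensor: "agree val \<sigma>1 \<sigma>2 (Tensor A B) \<Longrightarrow> agree val \<sigma>1 \<sigma>2 A \<and> agree val \<sigma>1 \<sigma>2 B"
  by (auto simp: agree_def)

lemma agree_par: "agree val \<sigma>1 \<sigma>2 (Par A B) \<Longrightarrow> agree val \<sigma>1 \<sigma>2 A \<and> agree val \<sigma>1 \<sigma>2 B"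
  by (auto simp: agree_def)

lemma fresh2:
  fixes S :: "nat set"
  assumes "finite S"
  obtains a b where "a \<notin> S" "b \<notin> S" "a \<noteq> b"
proof -
  define m where "m = Suc (Max (insert 0 S))"
  have "\<forall>s\<in>S. s < m" using assms unfolding m_def by (simp add: le_imp_less_Suc)
  then have "m \<notin> S" "Suc m \<notin> S" by auto
  then show ?thesis using that by auto
qed

lemma tr_alpha:
  assumes "tr val \<sigma>1 A T1" "tr val \<sigma>2 A T2" "agree val \<sigma>1 \<sigma>2 A"
  shows "equivclp alpha1 T1 T2"
  using assms
proof (induction A arbitrary: \<sigma>1 \<sigma>2 T1 T2)
  case (Atom p xs)
  then show ?case
    by (auto elim!: trE_atom simp: atom_eq[OF Atom(3)] simp del: map_eq_conv)
next
  case (Tensor A B)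
  from Tensor.prems(1) obtain A1 B1 where T1: "T1 = TTensor A1 B1" "tr val \<sigma>1 A A1" "tr val \<sigma>1 B B1"
    by (auto elim: trE_tensor)
  from Tensor.prems(2) obtain A2 B2 where T2: "T2 = TTensor A2 B2" "tr val \<sigma>2 A A2" "tr val \<sigma>2 B B2"
    by (auto elim: trE_tensor)
  have a: "equivclp alpha1 A1 A2" using Tensor.IH(1) T1 T2 agree_tensor[OF Tensor.prems(3)] by blast
  have b: "equivclp alpha1 B1 B2" using Tensor.IH(2) T1 T2 agree_tensor[OF Tensor.prems(3)] by blast
  have "equivclp alpha1 (TTensor A1 B1) (TTensor A2 B1)"
    using equivclp_map[of alpha1 alpha1 "\<lambda>X. TTensor X B1", OF alpha1.tensorL a] .
  also have "equivclp alpha1 (TTensor A2 B1) (TTensor A2 B2)"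
    using equivclp_map[of alpha1 alpha1 "\<lambda>X. TTensor A2 X", OF alpha1.tensorR b] .
  finally show ?case using T1 T2 by simp
next
  case (Par A B)
  from Par.prems(1) obtain A1 B1 where T1: "T1 = TPar A1 B1" "tr val \<sigma>1 A A1" "tr val \<sigma>1 B B1"
    by (auto elim: trE_par)
  from Par.prems(2) obtain A2 B2 where T2: "T2 = TPar A2 B2" "tr val \<sigma>2 A A2" "tr val \<sigma>2 B B2"
    by (auto elim: trE_par)
  have a: "equivclp alpha1 A1 A2" using Par.IH(1) T1 T2 agree_par[OF Par.prems(3)] by blast
  have b: "equivclp alpha1 B1 B2" using Par.IH(2) T1 T2 agree_par[OF Par.prems(3)] by blast
  have "equivclp alpha1 (TPar A1 B1) (TPar A2 B1)"
    using equivclp_map[of alpha1 alpha1 "\<lambda>X. TPar X B1", OF alpha1.parL a] .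
  also have "equivclp alpha1 (TPar A2 B1) (TPar A2 B2)"
    using equivclp_map[of alpha1 alpha1 "\<lambda>X. TPar A2 X", OF alpha1.parR b] .
  finally show ?case using T1 T2 by simp
next
  case (All x A)
  from All.prems(1) obtain u1 v1 B1 where T1: "T1 = Nabla u1 v1 B1" "tr val (\<sigma>1(x := (v1, u1))) A B1"
    "\<forall>y. y \<noteq> x \<longrightarrow> lfree val y A > 0 \<longrightarrow> fst (\<sigma>1 y) \<noteq> v1"
    "\<forall>y. y \<noteq> x \<longrightarrow> rfree val y A > 0 \<longrightarrow> snd (\<sigma>1 y) \<noteq> u1"
    by (auto elim: trE_all)
  from All.prems(2) obtain u2 v2 B2 where T2: "T2 = Nabla u2 v2 B2" "tr val (\<sigma>2(x := (v2, u2))) A B2"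
    "\<forall>y. y \<noteq> x \<longrightarrow> lfree val y A > 0 \<longrightarrow> fst (\<sigma>2 y) \<noteq> v2"
    "\<forall>y. y \<noteq> x \<longrightarrow> rfree val y A > 0 \<longrightarrow> snd (\<sigma>2 y) \<noteq> u2"
    by (auto elim: trE_all)
  obtain u' v' where f: "u' \<notin> idxs B1 \<union> idxs B2" "v' \<notin> idxs B1 \<union> idxs B2" "u' \<noteq> v'"
    using fresh2[of "idxs B1 \<union> idxs B2"] finite_idxs by blast
  define C1 where "C1 = subst_lo u' u1 (subst_up v' v1 B1)"
  define C2 where "C2 = subst_lo u' u2 (subst_up v' v2 B2)"
  have "u' \<notin> idxs (subst_up v' v1 B1)" using idxs_subst_up[of v' v1 B1] f by auto
  then have c1: "tr val (upd_lo u' u1 (upd_up v' v1 (\<sigma>1(x := (v1, u1))))) A C1"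
    unfolding C1_def using tr_subst_lo tr_subst_up T1(2) f by blast
  have "u' \<notin> idxs (subst_up v' v2 B2)" using idxs_subst_up[of v' v2 B2] f by auto
  then have c2: "tr val (upd_lo u' u2 (upd_up v' v2 (\<sigma>2(x := (v2, u2))))) A C2"
    unfolding C2_def using tr_subst_lo tr_subst_up T2(2) f by blast
  have c1': "tr val (\<sigma>1(x := (v', u'))) A C1"
    by (rule tr_cong[OF c1]) (use T1 in \<open>auto simp: agree_def upd_lo_def upd_up_def\<close>)
  have c2': "tr val (\<sigma>2(x := (v', u'))) A C2"
    by (rule tr_cong[OF c2]) (use T2 in \<open>auto simp: agree_def upd_lo_def upd_up_def\<close>)
  have ag: "agree val (\<sigma>1(x := (v', u'))) (\<sigma>2(x := (v', u'))) A"
    using All.prems(3) by (auto simp: agree_def split: if_splits)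
  have ih: "equivclp alpha1 C1 C2" by (rule All.IH[OF c1' c2' ag])
  have "alpha1 (Nabla u1 v1 B1) (Nabla u' v' C1)" unfolding C1_def by (rule alpha1.nabla) (use f in auto)
  then have "equivclp alpha1 (Nabla u1 v1 B1) (Nabla u' v' C1)" by blast
  also have "equivclp alpha1 (Nabla u' v' C1) (Nabla u' v' C2)"
    using equivclp_map[of alpha1 alpha1 "Nabla u' v'", OF alpha1.nablaC ih] .
  also have "alpha1 (Nabla u2 v2 B2) (Nabla u' v' C2)" unfolding C2_def by (rule alpha1.nabla) (use f in auto)
  then have "equivclp alpha1 (Nabla u' v' C2) (Nabla u2 v2 B2)" by blast
  finally show ?case using T1 T2 by simp
next
  case (Ex x A)
  from Ex.prems(1) obtain u1 v1 B1 where T1: "T1 = Tri u1 v1 B1" "tr val (\<sigma>1(x := (v1, u1))) A B1"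
    "\<forall>y. y \<noteq> x \<longrightarrow> lfree val y A > 0 \<longrightarrow> fst (\<sigma>1 y) \<noteq> v1"
    "\<forall>y. y \<noteq> x \<longrightarrow> rfree val y A > 0 \<longrightarrow> snd (\<sigma>1 y) \<noteq> u1"
    by (auto elim: trE_ex)
  from Ex.prems(2) obtain u2 v2 B2 where T2: "T2 = Tri u2 v2 B2" "tr val (\<sigma>2(x := (v2, u2))) A B2"
    "\<forall>y. y \<noteq> x \<longrightarrow> lfree val y A > 0 \<longrightarrow> fst (\<sigma>2 y) \<noteq> v2"
    "\<forall>y. y \<noteq> x \<longrightarrow> rfree val y A > 0 \<longrightarrow> snd (\<sigma>2 y) \<noteq> u2"
    by (auto elim: trE_ex)
  obtain u' v' where f: "u' \<notin> idxs B1 \<union> idxs B2" "v' \<notin> idxs B1 \<union> idxs B2" "u' \<noteq> v'"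
    using fresh2[of "idxs B1 \<union> idxs B2"] finite_idxs by blast
  define C1 where "C1 = subst_lo u' u1 (subst_up v' v1 B1)"
  define C2 where "C2 = subst_lo u' u2 (subst_up v' v2 B2)"
  have "u' \<notin> idxs (subst_up v' v1 B1)" using idxs_subst_up[of v' v1 B1] f by auto
  then have c1: "tr val (upd_lo u' u1 (upd_up v' v1 (\<sigma>1(x := (v1, u1))))) A C1"
    unfolding C1_def using tr_subst_lo tr_subst_up T1(2) f by blast
  have "u' \<notin> idxs (subst_up v' v2 B2)" using idxs_subst_up[of v' v2 B2] f by auto
  then have c2: "tr val (upd_lo u' u2 (upd_up v' v2 (\<sigma>2(x := (v2, u2))))) A C2"
    unfolding C2_def using tr_subst_lo tr_subst_up T2(2) f by blast
  have c1': "tr val (\<sigma>1(x := (v', u'))) A C1"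
    by (rule tr_cong[OF c1]) (use T1 in \<open>auto simp: agree_def upd_lo_def upd_up_def\<close>)
  have c2': "tr val (\<sigma>2(x := (v', u'))) A C2"
    by (rule tr_cong[OF c2]) (use T2 in \<open>auto simp: agree_def upd_lo_def upd_up_def\<close>)
  have ag: "agree val (\<sigma>1(x := (v', u'))) (\<sigma>2(x := (v', u'))) A"
    using Ex.prems(3) by (auto simp: agree_def split: if_splits)
  have ih: "equivclp alpha1 C1 C2" by (rule Ex.IH[OF c1' c2' ag])
  have "alpha1 (Tri u1 v1 B1) (Tri u' v' C1)" unfolding C1_def by (rule alpha1.tri) (use f in auto)
  then have "equivclp alpha1 (Tri u1 v1 B1) (Tri u' v' C1)" by blast
  also have "equivclp alpha1 (Tri u' v' C1) (Tri u' v' C2)"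
    using equivclp_map[of alpha1 alpha1 "Tri u' v'", OF alpha1.triC ih] .
  also have "alpha1 (Tri u2 v2 B2) (Tri u' v' C2)" unfolding C2_def by (rule alpha1.tri) (use f in auto)
  then have "equivclp alpha1 (Tri u' v' C2) (Tri u2 v2 B2)" by blast
  finally show ?case using T1 T2 by simp
qed

abbreviation STEP :: "'p tseq \<Rightarrow> 'p tseq \<Rightarrow> bool" where
  "STEP \<equiv> (\<lambda>X Y. alpha_step X Y \<or> eta_step X Y)"

lemma alpha_elem:
  assumes "equivclp alpha1 A B" "k < length \<Gamma>"
  shows "equivclp STEP (t, \<Gamma>[k := A]) (t, \<Gamma>[k := B])"
proof -
  have "STEP (t, \<Gamma>[k := x]) (t, \<Gamma>[k := y])" if "alpha1 x y" for x y
  proof -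
    have "alpha_step (t, \<Gamma>[k := x]) (t, (\<Gamma>[k := x])[k := y])"
      by (rule alpha_step.bound) (use assms(2) that in auto)
    then show ?thesis by simp
  qed
  then show ?thesis using equivclp_map[of alpha1 STEP "\<lambda>A. (t, \<Gamma>[k := A])", OF _ assms(1)] by blast
qed

lemma alpha_list:
  assumes "list_all2 (equivclp alpha1) \<Gamma>1 \<Gamma>2"
  shows "equivclp STEP (t, P @ \<Gamma>1) (t, P @ \<Gamma>2)"
  using assms
proof (induction arbitrary: P rule: list_all2_induct)
  case Nil
  then show ?case by simp
next
  case (Cons A \<Gamma>1 B \<Gamma>2)
  have "equivclp STEP (t, (P @ A # \<Gamma>1)[length P := A]) (t, (P @ A # \<Gamma>1)[length P := B])"
    by (rule alpha_elem) (use Cons in auto)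
  then have "equivclp STEP (t, P @ A # \<Gamma>1) (t, P @ B # \<Gamma>1)" by simp
  also have "equivclp STEP (t, (P @ [B]) @ \<Gamma>1) (t, (P @ [B]) @ \<Gamma>2)" by (rule Cons.IH)
  then have "equivclp STEP (t, P @ B # \<Gamma>1) (t, P @ B # \<Gamma>2)" by simp
  finally show ?case .
qed

fun allvars :: "'p fm \<Rightarrow> var set" where
  "allvars (Atom p xs) = set xs"
| "allvars (Tensor A B) = allvars A \<union> allvars B"
| "allvars (Par A B) = allvars A \<union> allvars B"
| "allvars (All x A) = allvars A"
| "allvars (Ex x A) = allvars A"

lemma finite_allvars: "finite (allvars A)"
  by (induction A) auto

lemma cnt: "0 < count (mset ys) x \<Longrightarrow> x \<in> set ys"
  by (simp add: count_mset_0_iff[symmetric])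

lemma lfree_allvars: "lfree val x A > 0 \<Longrightarrow> x \<in> allvars A"
proof (induction A)
  case (Atom p xs)
  then show ?case using cnt in_set_takeD by fastforce
qed (auto split: if_splits)

lemma rfree_allvars: "rfree val x A > 0 \<Longrightarrow> x \<in> allvars A"
proof (induction A)
  case (Atom p xs)
  then show ?case using cnt in_set_dropD by fastforce
qed (auto split: if_splits)

lemma sum_list_pos: "0 < sum_list (map (f :: 'a \<Rightarrow> nat) xs) \<longleftrightarrow> (\<exists>a\<in>set xs. 0 < f a)"
  by (induction xs) auto

lemma lfree_seq_ex: "lfree_seq val x \<Gamma> > 0 \<Longrightarrow> \<exists>A\<in>set \<Gamma>. lfree val x A > 0"
  unfolding lfree_seq_def sum_list_pos by blast

lemma rfree_seq_ex: "rfree_seq val x \<Gamma> > 0 \<Longrightarrow> \<exists>A\<in>set \<Gamma>. rfree val x A > 0"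
  unfolding rfree_seq_def sum_list_pos by blast

lemma finite_FV: "finite (FV_seq val \<Gamma>)"
proof (rule finite_subset)
  show "FV_seq val \<Gamma> \<subseteq> (\<Union>A\<in>set \<Gamma>. allvars A)"
  proof
    fix x assume "x \<in> FV_seq val \<Gamma>"
    then have "lfree_seq val x \<Gamma> > 0 \<or> rfree_seq val x \<Gamma> > 0" by (auto simp: FV_seq_def)
    then show "x \<in> (\<Union>A\<in>set \<Gamma>. allvars A)"
    proof
      assume "lfree_seq val x \<Gamma> > 0"
      then obtain A where "A \<in> set \<Gamma>" "lfree val x A > 0" using lfree_seq_ex by blast
      then show ?thesis using lfree_allvars by blast
    next
      assume "rfree_seq val x \<Gamma> > 0"
      then obtain A where "A \<in> set \<Gamma>" "rfree val x A > 0" using rfree_seq_ex by blast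
      then show ?thesis using rfree_allvars by blast
    qed
  qed
qed (simp add: finite_allvars)

lemma in_FV_l: "A \<in> set \<Gamma> \<Longrightarrow> lfree val x A > 0 \<Longrightarrow> x \<in> FV_seq val \<Gamma>"
  unfolding FV_seq_def lfree_seq_def rfree_seq_def by (auto simp: sum_list_pos)

lemma in_FV_r: "A \<in> set \<Gamma> \<Longrightarrow> rfree val x A > 0 \<Longrightarrow> x \<in> FV_seq val \<Gamma>"
  unfolding FV_seq_def lfree_seq_def rfree_seq_def by (auto simp: sum_list_pos)

definition sF :: "var set \<Rightarrow> var \<Rightarrow> idx \<times> idx" where
  "sF F y = (if y \<in> F then xl y else xr y, xr y)"

lemma xl_xr0: "xl a \<noteq> xr b"
  unfolding xl_def xr_def by presburger

lemma xl_inj: "xl a = xl b \<longleftrightarrow> a = b"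
  unfolding xl_def by simp

lemma xr_inj: "xr a = xr b \<longleftrightarrow> a = b"
  unfolding xr_def by simp

lemmas xl_xr = xl_xr0 xl_inj xr_inj

lemma inj_xr: "inj xr"
  by (auto simp: inj_def xl_xr)

lemma main_ind:
  assumes wf: "ling_wf val \<Gamma>" and er: "list_all2 (eta_red val) \<Gamma> \<Gamma>'"
  shows "finite F \<Longrightarrow> F \<subseteq> FV_seq val \<Gamma> \<Longrightarrow> \<exists>\<Gamma>F. list_all2 (tr val (sF F)) \<Gamma> \<Gamma>F \<and>
     (\<forall>T\<in>set \<Gamma>F. \<forall>z. z \<notin> F \<longrightarrow> xl z \<notin> idxs T) \<and>
     equivclp STEP ({#}, \<Gamma>') (\<Sum>x\<in>F. delta (xr x) (xl x), \<Gamma>F)"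
proof (induction F rule: finite_induct)
  case empty
  have e: "sF {} = map_prod xr xr \<circ> (\<lambda>y. (y, y))" by (auto simp: sF_def)
  have l: "list_all2 (tr val (sF {})) \<Gamma> (map (ren xr) \<Gamma>')"
    unfolding list_all2_map2 e
    by (rule list_all2_mono[OF er]) (rule tr_ren[OF eta_red_tr inj_xr])
  have i: "\<forall>T\<in>set (map (ren xr) \<Gamma>'). \<forall>z. z \<notin> {} \<longrightarrow> xl z \<notin> idxs T"
    by (auto simp: idxs_ren xl_xr)
  have "alpha_step ({#}, \<Gamma>') (image_mset (map_prod xr xr) {#}, map (ren xr) \<Gamma>')"
    by (rule alpha_step.rename[OF inj_xr])
  then have "equivclp STEP ({#}, \<Gamma>') (\<Sum>x\<in>{}. delta (xr x) (xl x), map (ren xr) \<Gamma>')"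
    by auto
  then show ?case using l i by blast
next
  case (insert x F)
  from insert obtain \<Gamma>F where l: "list_all2 (tr val (sF F)) \<Gamma> \<Gamma>F"
    and i: "\<forall>T\<in>set \<Gamma>F. \<forall>z. z \<notin> F \<longrightarrow> xl z \<notin> idxs T"
    and q: "equivclp STEP ({#}, \<Gamma>') (\<Sum>x\<in>F. delta (xr x) (xl x), \<Gamma>F)" by auto
  have xFV: "x \<in> FV_seq val \<Gamma>" using insert by auto
  then have "lfree_seq val x \<Gamma> = 1" "rfree_seq val x \<Gamma> = 1" using wf by (auto simp: ling_wf_def)
  then obtain A1 A2 where A: "A1 \<in> set \<Gamma>" "lfree val x A1 > 0" "A2 \<in> set \<Gamma>" "rfree val x A2 > 0"
    using lfree_seq_ex rfree_seq_ex by (metis zero_less_one)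
  from A(1) obtain k1 where k1: "k1 < length \<Gamma>" "\<Gamma> ! k1 = A1" by (auto simp: in_set_conv_nth)
  from A(3) obtain k2 where k2: "k2 < length \<Gamma>" "\<Gamma> ! k2 = A2" by (auto simp: in_set_conv_nth)
  have len: "length \<Gamma>F = length \<Gamma>" using l by (simp add: list_all2_lengthD)
  have "tr val (sF F) A1 (\<Gamma>F ! k1)" using l k1 by (auto simp: list_all2_conv_all_nth)
  then have fu: "free_up (xr x) (\<Gamma>F ! k1)" using tr_free[of val "sF F" A1 _ x] A insert(2)
    by (simp add: sF_def)
  have "tr val (sF F) A2 (\<Gamma>F ! k2)" using l k2 by (auto simp: list_all2_conv_all_nth)
  then have fl: "free_lo (xr x) (\<Gamma>F ! k2)" using tr_free[of val "sF F" A2 _ x] A insert(2)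
    by (simp add: sF_def)
  have fr: "xl x \<notin> seq_idxs (\<Sum>x\<in>F. delta (xr x) (xl x), \<Gamma>F)"
  proof -
    have st: "set_mset (\<Sum>x\<in>F. delta (xr x) (xl x)) = (\<lambda>y. (xr y, xl y)) ` F"
      using insert(1) by (simp add: set_mset_sum delta_def) blast
    have n1: "xl x \<notin> (\<Union>(j, i)\<in>set_mset (\<Sum>x\<in>F. delta (xr x) (xl x)). {j, i})"
      unfolding st using insert(2) by (auto simp: xl_xr)
    have n2: "xl x \<notin> (\<Union>A\<in>set \<Gamma>F. idxs A)" using i insert(2) by blast
    show ?thesis unfolding seq_idxs_def using n1 n2 by simp
  qed
  have "eta_step (\<Sum>x\<in>F. delta (xr x) (xl x), \<Gamma>F)
      (delta (xr x) (xl x) + (\<Sum>x\<in>F. delta (xr x) (xl x)), map (subst_up (xl x) (xr x)) \<Gamma>F)"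
  proof (rule eta_step.up)
    show "\<exists>A\<in>set \<Gamma>F. free_up (xr x) A" using fu k1 len nth_mem by metis
    show "\<exists>A\<in>set \<Gamma>F. free_lo (xr x) A" using fl k2 len nth_mem by metis
  qed (rule fr)
  then have q2: "equivclp STEP ({#}, \<Gamma>') (\<Sum>x\<in>insert x F. delta (xr x) (xl x), map (subst_up (xl x) (xr x)) \<Gamma>F)"
  proof -
    have "(\<Sum>x\<in>insert x F. delta (xr x) (xl x)) = delta (xr x) (xl x) + (\<Sum>x\<in>F. delta (xr x) (xl x))"
      using insert(1,2) by simp
    then show ?thesis using equivclp_into_equivclp[OF q] \<open>eta_step _ _\<close> by simp
  qed
  have e: "upd_up (xl x) (xr x) (sF F) = sF (insert x F)"
    using insert(2) by (auto simp: upd_up_def sF_def xl_xr)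
  have l2: "list_all2 (tr val (sF (insert x F))) \<Gamma> (map (subst_up (xl x) (xr x)) \<Gamma>F)"
    unfolding list_all2_map2 e[symmetric]
  proof (rule list_all2_all_nthI)
    show "length \<Gamma> = length \<Gamma>F" using len by simp
  next
    fix n assume n: "n < length \<Gamma>"
    have "tr val (sF F) (\<Gamma> ! n) (\<Gamma>F ! n)" using l n by (auto simp: list_all2_conv_all_nth)
    moreover have "xl x \<notin> idxs (\<Gamma>F ! n)" using i n len insert(2) by auto
    ultimately show "tr val (upd_up (xl x) (xr x) (sF F)) (\<Gamma> ! n) (subst_up (xl x) (xr x) (\<Gamma>F ! n))"
      by (rule tr_subst_up)
  qed
  have i2: "\<forall>T\<in>set (map (subst_up (xl x) (xr x)) \<Gamma>F). \<forall>z. z \<notin> insert x F \<longrightarrow> xl z \<notin> idxs T"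
  proof (intro ballI allI impI)
    fix T z assume T: "T \<in> set (map (subst_up (xl x) (xr x)) \<Gamma>F)" and z: "z \<notin> insert x F"
    then obtain T0 where T0: "T0 \<in> set \<Gamma>F" "T = subst_up (xl x) (xr x) T0" by auto
    have "xl z \<notin> idxs T0" using i T0(1) z by blast
    moreover have "xl z \<noteq> xl x" using z by (simp add: xl_xr)
    ultimately show "xl z \<notin> idxs T" using idxs_subst_up[of "xl x" "xr x" T0] T0(2) by blast
  qed
  show ?case using l2 i2 q2 by blast
qed

theorem proposition7p2:
  fixes val :: "'p \<Rightarrow> nat \<times> nat" and \<Gamma> :: "'p fm list" and S :: "'p tseq"
  assumes "ling_wf val \<Gamma>"
    and "eta_red_seq val \<Gamma> S"
  shows "eta_long_seq val \<Gamma> \<equiv>\<^sub>\<alpha>\<^sub>\<eta> S"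
proof -
  from assms(2) obtain \<Gamma>' where er: "list_all2 (eta_red val) \<Gamma> \<Gamma>'" and S: "S = ({#}, \<Gamma>')"
    by (auto simp: eta_red_seq_def)
  obtain \<Gamma>F where l: "list_all2 (tr val (sF (FV_seq val \<Gamma>))) \<Gamma> \<Gamma>F"
    and q: "equivclp STEP ({#}, \<Gamma>') (\<Sum>x\<in>FV_seq val \<Gamma>. delta (xr x) (xl x), \<Gamma>F)"
    using main_ind[OF assms(1) er finite_FV] by blast
  have len: "length \<Gamma>F = length \<Gamma>" using l by (simp add: list_all2_lengthD)
  have "list_all2 (equivclp alpha1) \<Gamma>F (map (eta_long val) \<Gamma>)"
  proof (rule list_all2_all_nthI)
    show "length \<Gamma>F = length (map (eta_long val) \<Gamma>)" using len by simp
  next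
    fix n assume n: "n < length \<Gamma>F"
    have t1: "tr val (sF (FV_seq val \<Gamma>)) (\<Gamma> ! n) (\<Gamma>F ! n)" using l n len by (auto simp: list_all2_conv_all_nth)
    have "\<Gamma> ! n \<in> set \<Gamma>" using n len by auto
    then have ag: "agree val (sF (FV_seq val \<Gamma>)) (\<lambda>y. (xl y, xr y)) (\<Gamma> ! n)"
      unfolding agree_def
    proof (intro conjI allI impI)
      fix y assume "0 < lfree val y (\<Gamma> ! n)"
      then have "y \<in> FV_seq val \<Gamma>" using in_FV_l \<open>\<Gamma> ! n \<in> set \<Gamma>\<close> by blast
      then show "fst (sF (FV_seq val \<Gamma>) y) = fst (xl y, xr y)" by (simp add: sF_def)
    next
      fix y show "snd (sF (FV_seq val \<Gamma>) y) = snd (xl y, xr y)" by (simp add: sF_def)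
    qed
    show "equivclp alpha1 (\<Gamma>F ! n) (map (eta_long val) \<Gamma> ! n)"
      using tr_alpha[OF t1 eta_long_tr ag] n len by simp
  qed
  then have "equivclp STEP (\<Sum>x\<in>FV_seq val \<Gamma>. delta (xr x) (xl x), [] @ \<Gamma>F)
      (\<Sum>x\<in>FV_seq val \<Gamma>. delta (xr x) (xl x), [] @ map (eta_long val) \<Gamma>)"
    by (rule alpha_list)
  then have X: "equivclp STEP (\<Sum>x\<in>FV_seq val \<Gamma>. delta (xr x) (xl x), \<Gamma>F)
      (\<Sum>x\<in>FV_seq val \<Gamma>. delta (xr x) (xl x), map (eta_long val) \<Gamma>)"
    by (simp only: append_Nil)
  have "equivclp STEP S (eta_long_seq val \<Gamma>)"
    unfolding eta_long_seq_def S by (rule equivclp_trans[OF q X])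
  then show ?thesis unfolding alpha_eta_equiv_def by (rule equivclp_sym)
qed

end
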